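(* Let $\mathcal L:\mathbb F^{q\times q}\to\mathbb F^{n\times n}$ be $*$-linear with matricization $L$ and Choi matrix $\mathbb L$, let $m=\operatorname{rank}\mathbb L$, choose $L_1,\ldots,L_m\in\mathbb F^{n\times q}$ with $\operatorname{span}\{L_1,\ldots,L_m\}=\operatorname{span}\{L_{ij}\}$, and let $A_1,\ldots,A_m$ and $\mathbb H=\mathbb H(\mathcal L;L_1,\ldots,L_m)$ be given by the construction below. Then $$\mathcal L(V)=\sum_{k,l=1}^m\mathbb H_{kl}A_lVA_k^*\ (V\in\mathbb F^{q\times q}),\qquad L=\sum_{k,l=1}^m\mathbb H_{kl}\,\overline{A_k}\otimes A_l,$$ $$\mathbb L=\sum_{k,l=1}^m\mathbb H_{kl}\operatorname{vec}_{n\times q}(A_l)\operatorname{vec}_{n\times q}(\overline{A_k})^T=\widehat A^*\mathbb H^T\widehat A,$$ where $\widehat A^*=[\operatorname{vec}_{n\times q}(A_1)\ \cdots\ \operatorname{vec}_{n\times q}(A_m)]\in\mathbb F^{nq\times m}$. Moreover $\mathbb H$ is Hermitian and invertible.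
   Context: $\mathbb F\in\{\mathbb R,\mathbb C\}$; $\otimes$ Kronecker product, $\circ$ Hadamard product, $\vec{\mathbf 1}_p$ all-ones vector, $\overline{X}$ entrywise conjugate, $\operatorname{vec}$ column-stacking vectorization. For linear $\mathcal L:\mathbb F^{q\times q}\to\mathbb F^{n\times n}$: matricization $L\in\mathbb F^{n^2\times q^2}$ with $L\operatorname{vec}(V)=\operatorname{vec}(\mathcal L(V))$, in blocks $L=[L_{ij}]$, $1\le i\le n$, $1\le j\le q$, $L_{ij}\in\mathbb F^{n\times q}$; Choi matrix $\mathbb L=[\mathcal L(\mathcal E^{(q)}_{ij})]_{i,j=1}^q$. $*$-linear: $\mathcal L(V^* )=\mathcal L(V)^*$. Construction: with $m=\operatorname{rank}\mathbb L=\dim\operatorname{span}\{L_{ij}\}$ and $L_1,\ldots,L_m$ spanning $\operatorname{span}\{L_{ij}\}$, let $L_{ij}=\sum_k\alpha^{ij}_kL_k$ (unique) and $L_k=\sum_{i,j}\beta^k_{ij}L_{ij}$ (any choice of scalars); $A_k$ has $(i,j)$ entry $\overline{\alpha^{ij}_k}$, $B_k$ has $(i,j)$ entry $\beta^k_{ij}$, and $\mathbb H(\mathcal L;L_1,\ldots,L_m)=[\vec{\mathbf 1}_n^*(B_k\circ\overline{L_l})\vec{\mathbf 1}_q]_{k,l=1}^m$. *)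

theory Defs
  imports "Jordan_Normal_Form.DL_Rank" "Jordan_Normal_Form.Schur_Decomposition"
begin

(* F is rendered as a type 'a :: conjugatable_field (instances: real with
   conjugate = id, complex with conjugate = cnj).  All indices are 0-based. *)

definition mconj :: "'a :: conjugatable_field mat \<Rightarrow> 'a mat" where
  "mconj A = map_mat conjugate A"

definition vecm :: "'a mat \<Rightarrow> 'a vec" where
  "vecm A = vec (dim_row A * dim_col A) (\<lambda>k. A $$ (k mod dim_row A, k div dim_row A))"

definition kron :: "'a :: times mat \<Rightarrow> 'a mat \<Rightarrow> 'a mat" where
  "kron A B = mat (dim_row A * dim_row B) (dim_col A * dim_col B)
     (\<lambda>(i,j). A $$ (i div dim_row B, j div dim_col B) * B $$ (i mod dim_row B, j mod dim_col B))"

definition hadamard :: "'a :: times mat \<Rightarrow> 'a mat \<Rightarrow> 'a mat" where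
  "hadamard A B = mat (dim_row A) (dim_col A) (\<lambda>(i,j). A $$ (i,j) * B $$ (i,j))"

definition outer :: "'a :: times vec \<Rightarrow> 'a vec \<Rightarrow> 'a mat" where
  "outer u v = mat (dim_vec u) (dim_vec v) (\<lambda>(i,j). u $ i * v $ j)"

definition unit_mat :: "nat \<Rightarrow> nat \<Rightarrow> nat \<Rightarrow> 'a :: zero_neq_one mat" where
  "unit_mat q i j = mat q q (\<lambda>(a,b). if a = i \<and> b = j then 1 else 0)"

definition msum :: "nat \<Rightarrow> nat \<Rightarrow> ('i \<Rightarrow> 'a :: comm_monoid_add mat) \<Rightarrow> 'i set \<Rightarrow> 'a mat" where
  "msum r c f I = mat r c (\<lambda>(a,b). \<Sum>i\<in>I. f i $$ (a,b))"

definition is_linear_map :: "nat \<Rightarrow> nat \<Rightarrow> ('a :: field mat \<Rightarrow> 'a mat) \<Rightarrow> bool" where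
  "is_linear_map q n \<L> \<longleftrightarrow>
     (\<forall>V \<in> carrier_mat q q. \<L> V \<in> carrier_mat n n) \<and>
     (\<forall>V \<in> carrier_mat q q. \<forall>W \<in> carrier_mat q q. \<L> (V + W) = \<L> V + \<L> W) \<and>
     (\<forall>c. \<forall>V \<in> carrier_mat q q. \<L> (c \<cdot>\<^sub>m V) = c \<cdot>\<^sub>m \<L> V)"

definition star_linear :: "nat \<Rightarrow> nat \<Rightarrow> ('a :: conjugatable_field mat \<Rightarrow> 'a mat) \<Rightarrow> bool" where
  "star_linear q n \<L> \<longleftrightarrow> is_linear_map q n \<L> \<and>
     (\<forall>V \<in> carrier_mat q q. \<L> (mat_adjoint V) = mat_adjoint (\<L> V))"

definition is_matricization :: "nat \<Rightarrow> nat \<Rightarrow> ('a :: comm_ring_1 mat \<Rightarrow> 'a mat) \<Rightarrow> 'a mat \<Rightarrow> bool" where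
  "is_matricization q n \<L> L \<longleftrightarrow> L \<in> carrier_mat (n*n) (q*q) \<and>
     (\<forall>V \<in> carrier_mat q q. L *\<^sub>v vecm V = vecm (\<L> V))"

definition blk :: "nat \<Rightarrow> nat \<Rightarrow> 'a mat \<Rightarrow> nat \<Rightarrow> nat \<Rightarrow> 'a mat" where
  "blk n q L i j = mat n q (\<lambda>(r,s). L $$ (i*n + r, j*q + s))"

definition choi :: "nat \<Rightarrow> nat \<Rightarrow> ('a :: zero_neq_one mat \<Rightarrow> 'a mat) \<Rightarrow> 'a mat" where
  "choi q n \<L> = mat (q*n) (q*n) (\<lambda>(a,b). \<L> (unit_mat q (a div n) (b div n)) $$ (a mod n, b mod n))"

definition mspan :: "nat \<Rightarrow> nat \<Rightarrow> ('i \<Rightarrow> 'a :: comm_ring_1 mat) \<Rightarrow> 'i set \<Rightarrow> 'a mat set" where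
  "mspan n q f I = {M \<in> carrier_mat n q. \<exists>c. M = msum n q (\<lambda>i. c i \<cdot>\<^sub>m f i) I}"

definition ones_vec :: "nat \<Rightarrow> 'a :: one vec" where
  "ones_vec p = vec p (\<lambda>i. 1)"

definition Amat :: "nat \<Rightarrow> nat \<Rightarrow> (nat \<Rightarrow> nat \<Rightarrow> nat \<Rightarrow> 'a :: conjugatable_field) \<Rightarrow> nat \<Rightarrow> 'a mat" where
  "Amat n q \<alpha> k = mat n q (\<lambda>(i,j). conjugate (\<alpha> i j k))"

definition Bmat :: "nat \<Rightarrow> nat \<Rightarrow> (nat \<Rightarrow> nat \<Rightarrow> nat \<Rightarrow> 'a) \<Rightarrow> nat \<Rightarrow> 'a mat" where
  "Bmat n q \<beta> k = mat n q (\<lambda>(i,j). \<beta> k i j)"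

definition Hmat :: "nat \<Rightarrow> nat \<Rightarrow> nat \<Rightarrow> (nat \<Rightarrow> 'a :: conjugatable_field mat)
     \<Rightarrow> (nat \<Rightarrow> nat \<Rightarrow> nat \<Rightarrow> 'a) \<Rightarrow> 'a mat" where
  "Hmat n q m Ls \<beta> = mat m m (\<lambda>(k,l).
      conjugate (ones_vec n) \<bullet> (hadamard (Bmat n q \<beta> k) (mconj (Ls l)) *\<^sub>v ones_vec q))"

definition Ahat_adj :: "nat \<Rightarrow> nat \<Rightarrow> nat \<Rightarrow> (nat \<Rightarrow> 'a mat) \<Rightarrow> 'a mat" where
  "Ahat_adj n q m A = mat_of_cols (n*q) (map (\<lambda>k. vecm (A k)) [0..<m])"

end

theory Submission
  imports Defs
begin

lemma conj_one_field: "conjugate (1::'a::conjugatable_field) = 1"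
proof -
  let ?x = "conjugate (1::'a)"
  have "?x * ?x = ?x" by (metis conjugate_dist_mul mult_1)
  moreover have "?x \<noteq> 0" by (metis conjugate_zero_iff zero_neq_one)
  ultimately show ?thesis by (metis mult_cancel_left1 mult.commute)
qed

lemma adj_dim[simp]: "dim_row (mat_adjoint A) = dim_col A" "dim_col (mat_adjoint A) = dim_row A"
  unfolding mat_adjoint_def by auto

lemma adj_index[simp]: "i < dim_col A \<Longrightarrow> j < dim_row A \<Longrightarrow> mat_adjoint A $$ (i,j) = conjugate (A $$ (j,i))"
  unfolding mat_adjoint_def by (simp add: mat_of_rows_index)

lemma sum_split_mult: fixes a b :: nat shows "(\<Sum>p<b*a. f p) = (\<Sum>j<b. \<Sum>s<a. f (j*a + s)) "
proof (induction b)
  case 0 then show ?case by simp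
next
  case (Suc b)
  have "{..<Suc b * a} = {..<b*a} \<union> {b*a..<b*a+a}" by auto
  then have "(\<Sum>p<Suc b*a. f p) = (\<Sum>p<b*a. f p) + (\<Sum>p\<in>{b*a..<b*a+a}. f p)"
    by (simp add: sum.union_disjoint ivl_disj_int)
  also have "(\<Sum>p\<in>{b*a..<b*a+a}. f p) = (\<Sum>s<a. f (b*a+s))"
    using sum.shift_bounds_nat_ivl[of f 0 "b*a" a] by (simp add: lessThan_atLeast0 add.commute)
  finally show ?case using Suc by simp
qed

lemma mult_index: "A \<in> carrier_mat a b \<Longrightarrow> B \<in> carrier_mat b c \<Longrightarrow> i < a \<Longrightarrow> j < c \<Longrightarrow>
   (A * B) $$ (i,j) = (\<Sum>t<b. A $$ (i,t) * B $$ (t,j))"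
  by (auto simp: scalar_prod_def lessThan_atLeast0 intro!: sum.cong)

lemma msum_index[simp]: "i < r \<Longrightarrow> j < c \<Longrightarrow> msum r c f I $$ (i,j) = (\<Sum>x\<in>I. f x $$ (i,j))"
  "dim_row (msum r c f I) = r" "dim_col (msum r c f I) = c"
  unfolding msum_def by auto

lemma vecm_index: "X \<in> carrier_mat n c \<Longrightarrow> r < n \<Longrightarrow> i < c \<Longrightarrow> vecm X $ (i*n + r) = X $$ (r,i)"
proof -
  assume X: "X \<in> carrier_mat n c" and r: "r < n" and i: "i < c"
  have "i*n + r < (i+1)*n" using r by simp
  also have "\<dots> \<le> c * n" using i by (intro mult_le_mono1) simp
  finally have lt: "i*n+r < n*c" by (simp add: mult.commute)
  show ?thesis unfolding vecm_def using X r lt by auto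
qed

lemma vecm_index2: "X \<in> carrier_mat n c \<Longrightarrow> a < n*c \<Longrightarrow> vecm X $ a = X $$ (a mod n, a div n)"
  unfolding vecm_def by auto

lemma vecm_dim[simp]: "dim_vec (vecm X) = dim_row X * dim_col X"
  unfolding vecm_def by auto

context vec_space begin

lemma rank_mult_le:
  assumes P: "P \<in> carrier_mat n m" and Q: "Q \<in> carrier_mat m M"
  shows "rank (P * Q) \<le> rank P"
proof -
  have cP: "set (cols P) \<subseteq> carrier_vec n" using P cols_dim by blast
  have cPQ: "set (cols (P*Q)) \<subseteq> carrier_vec n" using P Q cols_dim
    by (metis carrier_matD(1) index_mult_mat(2))
  have sub: "set (cols (P*Q)) \<subseteq> span (set (cols P))"
  proof
    fix w assume "w \<in> set (cols (P*Q))"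
    then obtain j where j: "j < M" "w = col (P*Q) j" using P Q
      by (metis cols_length cols_nth in_set_conv_nth carrier_matD(2) index_mult_mat(3))
    then have "w = P *\<^sub>v col Q j" using col_mult2[OF P Q j(1)] by simp
    also have "\<dots> = mat_of_cols n (cols P) *\<^sub>v vec (length (cols P)) (\<lambda>i. col Q j $ i)"
      using P Q by (intro arg_cong2[where f = "(*\<^sub>v)"]) (auto intro!: eq_vecI)
    also have "\<dots> = lincomb_list (\<lambda>i. col Q j $ i) (cols P)"
      using cP by (subst lincomb_list_as_mat_mult) auto
    also have "\<dots> \<in> span_list (cols P)" by (intro in_span_listI) auto
    finally show "w \<in> span (set (cols P))" using span_list_as_span[OF cP] by simp
  qed
  have s1: "VectorSpace.subspace class_ring (span (set (cols P))) V" using cP span_is_subspace by auto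
  have s2: "VectorSpace.subspace class_ring (span (set (cols (P*Q)))) V" using cPQ span_is_subspace by auto
  have incl: "span (set (cols (P*Q))) \<subseteq> span (set (cols P))"
    using span_subsetI[OF cP sub] .
  have nest: "VectorSpace.subspace class_ring (span (set (cols (P*Q)))) (vs (span (set (cols P))))"
    using nested_subspaces[OF s1 s2 incl] .
  have f1: "vectorspace.fin_dim class_ring (vs (span (set (cols P))))" using fin_dim_span_cols[OF P] .
  have f2: "vectorspace.fin_dim class_ring (vs (span (set (cols (P*Q)))))"
    using fin_dim_span_cols[of "P*Q" M] P Q by auto
  show ?thesis unfolding rank_def
    using vectorspace.subspace_dim[OF subspace_is_vs[OF s1] nest f1] f2 by auto
qed

lemma rank_le_card_cols:
  assumes P: "P \<in> carrier_mat n m"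
  shows "rank P \<le> card (set (cols P))"
proof -
  obtain S where S: "maximal S (\<lambda>T. T \<subseteq> set (cols P) \<and> lin_indpt T)"
    using maximal_exists[of "(\<lambda>T. T \<subseteq> set (cols P) \<and> lin_indpt T)" "card (set (cols P))" "{}"]
    by (meson List.finite_set card_mono empty_iff empty_subsetI finite_lin_indpt2 rev_finite_subset)
  then have "card S \<le> card (set (cols P))" by (simp add: card_mono maximal_def)
  then show ?thesis using rank_card_indpt[OF P S] by simp
qed

lemma rank_lt_kernel:
  assumes P: "P \<in> carrier_mat n m" and v: "v \<in> carrier_vec m" "v \<noteq> 0\<^sub>v m" "P *\<^sub>v v = 0\<^sub>v n"
  shows "rank P < m"
proof (cases "distinct (cols P)")
  case True
  have dep: "lin_dep (set (cols P))" using lin_depI[OF P v True] .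
  have "rank P \<le> m" using rank_le_nc[OF P] .
  moreover have "rank P \<noteq> m" using full_rank_lin_indpt[OF P _ True] dep by blast
  ultimately show ?thesis by simp
next
  case False
  have "card (set (cols P)) < length (cols P)" using False card_distinct card_length le_neq_implies_less by blast
  then show ?thesis using rank_le_card_cols[OF P] P by simp
qed

end


lemma idx_lt: "i < (c::nat) \<Longrightarrow> r < n \<Longrightarrow> i*n + r < c*n"
proof -
  assume "i < c" "r < n"
  have "i*n + r < (i+1)*n" using \<open>r < n\<close> by simp
  also have "\<dots> \<le> c * n" using \<open>i < c\<close> by (intro mult_le_mono1) simp
  finally show ?thesis .
qed

theorem theorem5p1:
  fixes \<L> :: "'a :: conjugatable_field mat \<Rightarrow> 'a mat"
    and L :: "'a mat" and q n m :: nat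
    and Ls :: "nat \<Rightarrow> 'a mat"
    and \<alpha> :: "nat \<Rightarrow> nat \<Rightarrow> nat \<Rightarrow> 'a"
    and \<beta> :: "nat \<Rightarrow> nat \<Rightarrow> nat \<Rightarrow> 'a"
  assumes starlin: "star_linear q n \<L>"
    and matr: "is_matricization q n \<L> L"
    and m_def: "m = vec_space.rank (q*n) (choi q n \<L>)"
    and Ls_carrier: "\<forall>k<m. Ls k \<in> carrier_mat n q"
    and Ls_span: "mspan n q Ls {..<m} = mspan n q (\<lambda>(i,j). blk n q L i j) ({..<n} \<times> {..<q})"
    and alpha: "\<forall>i<n. \<forall>j<q. blk n q L i j = msum n q (\<lambda>k. \<alpha> i j k \<cdot>\<^sub>m Ls k) {..<m}"
    and beta: "\<forall>k<m. Ls k = msum n q (\<lambda>(i,j). \<beta> k i j \<cdot>\<^sub>m blk n q L i j) ({..<n} \<times> {..<q})"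
  defines "A \<equiv> Amat n q \<alpha>"
    and "H \<equiv> Hmat n q m Ls \<beta>"
  shows "(\<forall>V \<in> carrier_mat q q.
            \<L> V = msum n n (\<lambda>(k,l). H $$ (k,l) \<cdot>\<^sub>m (A l * V * mat_adjoint (A k))) ({..<m} \<times> {..<m}))
       \<and> L = msum (n*n) (q*q) (\<lambda>(k,l). H $$ (k,l) \<cdot>\<^sub>m kron (mconj (A k)) (A l)) ({..<m} \<times> {..<m})
       \<and> choi q n \<L> = msum (n*q) (n*q)
            (\<lambda>(k,l). H $$ (k,l) \<cdot>\<^sub>m outer (vecm (A l)) (vecm (mconj (A k)))) ({..<m} \<times> {..<m})
       \<and> choi q n \<L> = Ahat_adj n q m A * transpose_mat H * mat_adjoint (Ahat_adj n q m A)
       \<and> mat_adjoint H = H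
       \<and> invertible_mat H"
proof -
  have LVc: "\<And>V. V \<in> carrier_mat q q \<Longrightarrow> \<L> V \<in> carrier_mat n n"
    using starlin unfolding star_linear_def is_linear_map_def by auto
  have Ladj: "\<And>V. V \<in> carrier_mat q q \<Longrightarrow> \<L> (mat_adjoint V) = mat_adjoint (\<L> V)"
    using starlin unfolding star_linear_def by auto
  have Lc: "L \<in> carrier_mat (n*n) (q*q)" and mv: "\<And>V. V \<in> carrier_mat q q \<Longrightarrow> L *\<^sub>v vecm V = vecm (\<L> V)"
    using matr unfolding is_matricization_def by auto
  have Ac: "\<And>k. A k \<in> carrier_mat n q" unfolding A_def Amat_def by auto
  have Ai: "\<And>k r s. r < n \<Longrightarrow> s < q \<Longrightarrow> A k $$ (r,s) = conjugate (\<alpha> r s k)"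
    unfolding A_def Amat_def by auto
  have Hc: "H \<in> carrier_mat m m" unfolding H_def Hmat_def by auto
  have FA: "\<And>i j r s. i < n \<Longrightarrow> j < q \<Longrightarrow> r < n \<Longrightarrow> s < q \<Longrightarrow>
     L $$ (i*n+r, j*q+s) = (\<Sum>k<m. \<alpha> i j k * Ls k $$ (r,s))"
  proof -
    fix i j r s assume ij: "i < n" "j < q" "r < n" "s < q"
    have "L $$ (i*n+r, j*q+s) = blk n q L i j $$ (r,s)" unfolding blk_def using ij by simp
    also have "\<dots> = (\<Sum>k<m. \<alpha> i j k * Ls k $$ (r,s))" using alpha ij Ls_carrier
      by (auto intro!: sum.cong)
    finally show "L $$ (i*n+r, j*q+s) = (\<Sum>k<m. \<alpha> i j k * Ls k $$ (r,s))" .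
  qed
  have FB: "\<And>k r s. k < m \<Longrightarrow> r < n \<Longrightarrow> s < q \<Longrightarrow>
     Ls k $$ (r,s) = (\<Sum>i<n. \<Sum>j<q. \<beta> k i j * L $$ (i*n+r, j*q+s))"
  proof -
    fix k r s assume ks: "k < m" "r < n" "s < q"
    have e: "Ls k = msum n q (\<lambda>(i,j). \<beta> k i j \<cdot>\<^sub>m blk n q L i j) ({..<n} \<times> {..<q})"
      using beta ks by blast
    have "Ls k $$ (r,s) = (\<Sum>(i,j)\<in>{..<n} \<times> {..<q}. \<beta> k i j * L $$ (i*n+r, j*q+s))"
      by (subst e) (use ks in \<open>auto simp: blk_def intro!: sum.cong\<close>)
    also have "\<dots> = (\<Sum>i<n. \<Sum>j<q. \<beta> k i j * L $$ (i*n+r, j*q+s))"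
      by (simp add: sum.cartesian_product)
    finally show "Ls k $$ (r,s) = (\<Sum>i<n. \<Sum>j<q. \<beta> k i j * L $$ (i*n+r, j*q+s))" .
  qed
  have FLV: "\<And>V r i. V \<in> carrier_mat q q \<Longrightarrow> r < n \<Longrightarrow> i < n \<Longrightarrow>
     \<L> V $$ (r,i) = (\<Sum>j<q. \<Sum>s<q. L $$ (i*n+r, j*q+s) * V $$ (s,j))"
  proof -
    fix V :: "'a mat" and r i assume V: "V \<in> carrier_mat q q" and ri: "r < n" "i < n"
    have x: "i*n+r < n*n" using idx_lt[OF ri(2) ri(1)] .
    have "\<L> V $$ (r,i) = vecm (\<L> V) $ (i*n+r)" using vecm_index[OF LVc[OF V] ri] by simp
    also have "\<dots> = (L *\<^sub>v vecm V) $ (i*n+r)" using mv[OF V] by simp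
    also have "\<dots> = (\<Sum>p<q*q. L $$ (i*n+r,p) * vecm V $ p)"
      using Lc V x by (auto simp: scalar_prod_def lessThan_atLeast0 intro!: sum.cong)
    also have "\<dots> = (\<Sum>j<q. \<Sum>s<q. L $$ (i*n+r, j*q+s) * vecm V $ (j*q+s))"
      by (rule sum_split_mult)
    also have "\<dots> = (\<Sum>j<q. \<Sum>s<q. L $$ (i*n+r, j*q+s) * V $$ (s,j))"
      using V by (auto intro!: sum.cong simp: vecm_index)
    finally show "\<L> V $$ (r,i) = (\<Sum>j<q. \<Sum>s<q. L $$ (i*n+r, j*q+s) * V $$ (s,j))" .
  qed
  have Ec: "\<And>s j. unit_mat q s j \<in> carrier_mat q q" unfolding unit_mat_def by auto
  have FE: "\<And>s j r i. s < q \<Longrightarrow> j < q \<Longrightarrow> r < n \<Longrightarrow> i < n \<Longrightarrow>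
      \<L> (unit_mat q s j) $$ (r,i) = L $$ (i*n+r, j*q+s)"
  proof -
    fix s j r i assume sj: "s < q" "j < q" "r < n" "i < n"
    have "\<L> (unit_mat q s j) $$ (r,i) = (\<Sum>j'<q. \<Sum>s'<q. L $$ (i*n+r, j'*q+s') * unit_mat q s j $$ (s',j'))"
      using FLV[OF Ec sj(3,4)] .
    also have "\<dots> = (\<Sum>j'<q. if j' = j then L $$ (i*n+r, j'*q+s) else 0)"
    proof (rule sum.cong[OF refl])
      fix j' assume j': "j' \<in> {..<q}"
      have e: "\<And>s' j''. s' < q \<Longrightarrow> j'' < q \<Longrightarrow> unit_mat q s j $$ (s',j'') = (if s' = s \<and> j'' = j then 1 else 0)"
        unfolding unit_mat_def by simp
      show "(\<Sum>s'<q. L $$ (i*n+r, j'*q+s') * unit_mat q s j $$ (s',j')) = (if j' = j then L $$ (i*n+r, j'*q+s) else 0)"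
      proof (cases "j' = j")
        case True
        have "(\<Sum>s'<q. L $$ (i*n+r, j'*q+s') * unit_mat q s j $$ (s',j')) = (\<Sum>s'<q. if s' = s then L $$ (i*n+r, j'*q+s') else 0)"
          using j' by (intro sum.cong refl) (simp add: e True)
        also have "\<dots> = L $$ (i*n+r, j'*q+s)" using sj(1) by (simp add: sum.delta')
        finally show ?thesis using True by simp
      next
        case False
        then show ?thesis using j' by (simp add: e)
      qed
    qed
    also have "\<dots> = L $$ (i*n+r, j*q+s)" using sj by simp
    finally show "\<L> (unit_mat q s j) $$ (r,i) = L $$ (i*n+r, j*q+s)" .
  qed
  have FS: "\<And>i r j s. i < n \<Longrightarrow> r < n \<Longrightarrow> j < q \<Longrightarrow> s < q \<Longrightarrow>
      L $$ (i*n+r, j*q+s) = conjugate (L $$ (r*n+i, s*q+j))"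
  proof -
    fix i r j s assume ij: "i < n" "r < n" "j < q" "s < q"
    have adjE: "mat_adjoint (unit_mat q j s) = unit_mat q s j"
      using ij by (intro eq_matI) (auto simp: unit_mat_def conj_one_field)
    have "L $$ (i*n+r, j*q+s) = \<L> (unit_mat q s j) $$ (r,i)" using FE[OF ij(4) ij(3) ij(2) ij(1)] by simp
    also have "\<dots> = mat_adjoint (\<L> (unit_mat q j s)) $$ (r,i)"
      using Ladj[OF Ec[of j s]] unfolding adjE by simp
    also have "\<dots> = conjugate (\<L> (unit_mat q j s) $$ (i,r))"
      using LVc[OF Ec, of j s] ij by simp
    also have "\<dots> = conjugate (L $$ (r*n+i, s*q+j))" using FE[OF ij(3) ij(4) ij(1) ij(2)] by simp
    finally show "L $$ (i*n+r, j*q+s) = conjugate (L $$ (r*n+i, s*q+j))" .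
  qed
  have FH: "\<And>k l. k < m \<Longrightarrow> l < m \<Longrightarrow>
      H $$ (k,l) = (\<Sum>i<n. \<Sum>j<q. \<beta> k i j * conjugate (Ls l $$ (i,j)))"
    using Ls_carrier unfolding H_def Hmat_def
    by (auto simp: scalar_prod_def hadamard_def Bmat_def mconj_def ones_vec_def conj_one_field lessThan_atLeast0 intro!: sum.cong)
  have FK: "\<And>k r s. k < m \<Longrightarrow> r < n \<Longrightarrow> s < q \<Longrightarrow>
      Ls k $$ (r,s) = (\<Sum>l<m. H $$ (k,l) * A l $$ (r,s))"
  proof -
    fix k r s assume ks: "k < m" "r < n" "s < q"
    have "Ls k $$ (r,s) = (\<Sum>i<n. \<Sum>j<q. \<beta> k i j * L $$ (i*n+r, j*q+s))" using FB ks by simp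
    also have "\<dots> = (\<Sum>i<n. \<Sum>j<q. \<beta> k i j * conjugate (\<Sum>l<m. \<alpha> r s l * Ls l $$ (i,j)))"
    proof (intro sum.cong refl)
      fix i j assume i: "i \<in> {..<n}" and j: "j \<in> {..<q}"
      then have i': "i < n" and j': "j < q" by auto
      show "\<beta> k i j * L $$ (i*n+r, j*q+s) = \<beta> k i j * conjugate (\<Sum>l<m. \<alpha> r s l * Ls l $$ (i,j))"
        using FS[OF i' ks(2) j' ks(3)] FA[OF ks(2) ks(3) i' j'] by simp
    qed
    also have "\<dots> = (\<Sum>i<n. \<Sum>j<q. \<Sum>l<m. \<beta> k i j * conjugate (Ls l $$ (i,j)) * conjugate (\<alpha> r s l))"
      by (intro sum.cong refl) (simp add: sum_conjugate conjugate_dist_mul sum_distrib_left ac_simps)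
    also have "\<dots> = (\<Sum>i<n. \<Sum>l<m. \<Sum>j<q. \<beta> k i j * conjugate (Ls l $$ (i,j)) * conjugate (\<alpha> r s l))"
      by (rule sum.cong[OF refl], rule sum.swap)
    also have "\<dots> = (\<Sum>l<m. \<Sum>i<n. \<Sum>j<q. \<beta> k i j * conjugate (Ls l $$ (i,j)) * conjugate (\<alpha> r s l))"
      by (rule sum.swap)
    also have "\<dots> = (\<Sum>l<m. H $$ (k,l) * A l $$ (r,s))"
      using ks FH Ai by (intro sum.cong refl) (simp add: sum_distrib_right)
    finally show "Ls k $$ (r,s) = (\<Sum>l<m. H $$ (k,l) * A l $$ (r,s))" .
  qed
  have FL: "\<And>i j r s. i < n \<Longrightarrow> j < q \<Longrightarrow> r < n \<Longrightarrow> s < q \<Longrightarrow>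
     L $$ (i*n+r, j*q+s) = (\<Sum>k<m. \<Sum>l<m. \<alpha> i j k * H $$ (k,l) * A l $$ (r,s))"
    using FA FK by (simp add: sum_distrib_left mult.assoc)
  have swap3: "\<And>f :: nat \<Rightarrow> nat \<Rightarrow> nat \<Rightarrow> 'a. \<And>a b c.
      (\<Sum>x<a. \<Sum>y<b. \<Sum>z<c. f x y z) = (\<Sum>z<c. \<Sum>x<a. \<Sum>y<b. f x y z)"
  proof -
    fix f :: "nat \<Rightarrow> nat \<Rightarrow> nat \<Rightarrow> 'a" and a b c :: nat
    have "(\<Sum>x<a. \<Sum>y<b. \<Sum>z<c. f x y z) = (\<Sum>x<a. \<Sum>z<c. \<Sum>y<b. f x y z)"
      by (rule sum.cong[OF refl], rule sum.swap)
    also have "\<dots> = (\<Sum>z<c. \<Sum>x<a. \<Sum>y<b. f x y z)" by (rule sum.swap)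
    finally show "(\<Sum>x<a. \<Sum>y<b. \<Sum>z<c. f x y z) = (\<Sum>z<c. \<Sum>x<a. \<Sum>y<b. f x y z)" .
  qed
  have mconjc: "\<And>k. mconj (A k) \<in> carrier_mat n q" using Ac unfolding mconj_def by auto
  have mconji: "\<And>k r s. r < n \<Longrightarrow> s < q \<Longrightarrow> mconj (A k) $$ (r,s) = conjugate (A k $$ (r,s))"
    unfolding mconj_def A_def Amat_def by auto
  have Adim[simp]: "\<And>k. dim_row (A k) = n" "\<And>k. dim_col (A k) = q"
    "\<And>k. dim_row (mconj (A k)) = n" "\<And>k. dim_col (mconj (A k)) = q"
    using Ac mconjc by auto
  have choic: "choi q n \<L> \<in> carrier_mat (n*q) (n*q)" unfolding choi_def by (auto simp: mult.commute)
  have PC: "\<And>a b. a < n*q \<Longrightarrow> b < n*q \<Longrightarrow> choi q n \<L> $$ (a,b) =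
      (\<Sum>k<m. \<Sum>l<m. H $$ (k,l) * (vecm (A l) $ a * conjugate (vecm (A k) $ b)))"
  proof -
    fix a b assume ab: "a < n*q" "b < n*q"
    have n0: "n > 0" using ab by (cases n) auto
    have d: "a div n < q" "b div n < q" using ab by (auto simp: less_mult_imp_div_less mult.commute)
    have md: "a mod n < n" "b mod n < n" using n0 by auto
    have "choi q n \<L> $$ (a,b) = \<L> (unit_mat q (a div n) (b div n)) $$ (a mod n, b mod n)"
      unfolding choi_def using ab by (simp add: mult.commute)
    also have "\<dots> = L $$ ((b mod n)*n + a mod n, (b div n)*q + a div n)"
      using FE[OF d md] .
    also have "\<dots> = (\<Sum>k<m. \<Sum>l<m. \<alpha> (b mod n) (b div n) k * H $$ (k,l) * A l $$ (a mod n, a div n))"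
      using FL[OF md(2) d(2) md(1) d(1)] .
    also have "\<dots> = (\<Sum>k<m. \<Sum>l<m. H $$ (k,l) * (vecm (A l) $ a * conjugate (vecm (A k) $ b)))"
    proof -
      have va: "\<And>k. vecm (A k) $ a = conjugate (\<alpha> (a mod n) (a div n) k)"
        using vecm_index2[OF Ac ab(1)] Ai md d by simp
      have vb: "\<And>k. conjugate (vecm (A k) $ b) = \<alpha> (b mod n) (b div n) k"
        using vecm_index2[OF Ac ab(2)] Ai md d by simp
      show ?thesis using Ai[OF md(1) d(1)] by (simp add: va vb ac_simps)
    qed
    finally show "choi q n \<L> $$ (a,b) = (\<Sum>k<m. \<Sum>l<m. H $$ (k,l) * (vecm (A l) $ a * conjugate (vecm (A k) $ b)))" .
  qed
  have P3: "choi q n \<L> = msum (n*q) (n*q)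
            (\<lambda>(k,l). H $$ (k,l) \<cdot>\<^sub>m outer (vecm (A l)) (vecm (mconj (A k)))) ({..<m} \<times> {..<m})"
  proof (rule eq_matI)
    show "dim_row (choi q n \<L>) = dim_row (msum (n*q) (n*q)
            (\<lambda>(k,l). H $$ (k,l) \<cdot>\<^sub>m outer (vecm (A l)) (vecm (mconj (A k)))) ({..<m} \<times> {..<m}))"
      using choic by simp
    show "dim_col (choi q n \<L>) = dim_col (msum (n*q) (n*q)
            (\<lambda>(k,l). H $$ (k,l) \<cdot>\<^sub>m outer (vecm (A l)) (vecm (mconj (A k)))) ({..<m} \<times> {..<m}))"
      using choic by simp
    fix a b assume "a < dim_row (msum (n*q) (n*q)
            (\<lambda>(k,l). H $$ (k,l) \<cdot>\<^sub>m outer (vecm (A l)) (vecm (mconj (A k)))) ({..<m} \<times> {..<m}))"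
       "b < dim_col (msum (n*q) (n*q)
            (\<lambda>(k,l). H $$ (k,l) \<cdot>\<^sub>m outer (vecm (A l)) (vecm (mconj (A k)))) ({..<m} \<times> {..<m}))"
    then have ab: "a < n*q" "b < n*q" by auto
    have n0: "n > 0" using ab by (cases n) auto
    have d: "b div n < q" using ab by (auto simp: less_mult_imp_div_less mult.commute)
    have md: "b mod n < n" using n0 by auto
    have vc: "\<And>k. vecm (mconj (A k)) $ b = conjugate (vecm (A k) $ b)"
      using vecm_index2[OF mconjc ab(2)] vecm_index2[OF Ac ab(2)] mconji d md by simp
    have "msum (n*q) (n*q)
            (\<lambda>(k,l). H $$ (k,l) \<cdot>\<^sub>m outer (vecm (A l)) (vecm (mconj (A k)))) ({..<m} \<times> {..<m}) $$ (a,b)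
       = (\<Sum>(k,l)\<in>{..<m} \<times> {..<m}. H $$ (k,l) * (vecm (A l) $ a * conjugate (vecm (A k) $ b)))"
      using ab Ac mconjc by (auto simp: outer_def vc intro!: sum.cong)
    also have "\<dots> = choi q n \<L> $$ (a,b)" using PC[OF ab] by (simp add: sum.cartesian_product)
    finally show "choi q n \<L> $$ (a,b) = msum (n*q) (n*q)
            (\<lambda>(k,l). H $$ (k,l) \<cdot>\<^sub>m outer (vecm (A l)) (vecm (mconj (A k)))) ({..<m} \<times> {..<m}) $$ (a,b)" by simp
  qed
  define Ah where "Ah = Ahat_adj n q m A"
  have Ahc: "Ah \<in> carrier_mat (n*q) m" unfolding Ah_def Ahat_adj_def by auto
  have Ahi: "\<And>a k. a < n*q \<Longrightarrow> k < m \<Longrightarrow> Ah $$ (a,k) = vecm (A k) $ a"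
    unfolding Ah_def Ahat_adj_def by (simp add: mat_of_cols_index)
  have P4: "choi q n \<L> = Ah * transpose_mat H * mat_adjoint Ah"
  proof (rule eq_matI)
    show "dim_row (choi q n \<L>) = dim_row (Ah * transpose_mat H * mat_adjoint Ah)" using choic Ahc by simp
    show "dim_col (choi q n \<L>) = dim_col (Ah * transpose_mat H * mat_adjoint Ah)" using choic Ahc by simp
    fix a b assume "a < dim_row (Ah * transpose_mat H * mat_adjoint Ah)" "b < dim_col (Ah * transpose_mat H * mat_adjoint Ah)"
    then have ab: "a < n*q" "b < n*q" using Ahc by auto
    have HT: "transpose_mat H \<in> carrier_mat m m" using Hc by simp
    have AHc: "Ah * transpose_mat H \<in> carrier_mat (n*q) m" using Ahc HT by simp
    have adc: "mat_adjoint Ah \<in> carrier_mat m (n*q)" using Ahc by auto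
    have "(Ah * transpose_mat H * mat_adjoint Ah) $$ (a,b) = (\<Sum>l<m. (Ah * transpose_mat H) $$ (a,l) * mat_adjoint Ah $$ (l,b))"
      using mult_index[OF AHc adc ab] .
    also have "\<dots> = (\<Sum>l<m. (\<Sum>k<m. Ah $$ (a,k) * transpose_mat H $$ (k,l)) * conjugate (Ah $$ (b,l)))"
      using ab Ahc by (intro sum.cong refl) (simp add: mult_index[OF Ahc HT])
    also have "\<dots> = (\<Sum>l<m. \<Sum>k<m. H $$ (l,k) * (vecm (A k) $ a * conjugate (vecm (A l) $ b)))"
      using ab Ahc Hc by (intro sum.cong refl) (simp add: Ahi sum_distrib_right sum_distrib_left ac_simps)
    also have "\<dots> = choi q n \<L> $$ (a,b)" using PC[OF ab] by simp
    finally show "choi q n \<L> $$ (a,b) = (Ah * transpose_mat H * mat_adjoint Ah) $$ (a,b)" by simp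
  qed
  have P1: "\<forall>V \<in> carrier_mat q q.
            \<L> V = msum n n (\<lambda>(k,l). H $$ (k,l) \<cdot>\<^sub>m (A l * V * mat_adjoint (A k))) ({..<m} \<times> {..<m})"
  proof
    fix V :: "'a mat" assume V: "V \<in> carrier_mat q q"
    have Vd[simp]: "dim_row V = q" "dim_col V = q" using V by auto
    show "\<L> V = msum n n (\<lambda>(k,l). H $$ (k,l) \<cdot>\<^sub>m (A l * V * mat_adjoint (A k))) ({..<m} \<times> {..<m})"
    proof (rule eq_matI)
      show "dim_row (\<L> V) = dim_row (msum n n (\<lambda>(k,l). H $$ (k,l) \<cdot>\<^sub>m (A l * V * mat_adjoint (A k))) ({..<m} \<times> {..<m}))"
        using LVc[OF V] by simp
      show "dim_col (\<L> V) = dim_col (msum n n (\<lambda>(k,l). H $$ (k,l) \<cdot>\<^sub>m (A l * V * mat_adjoint (A k))) ({..<m} \<times> {..<m}))"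
        using LVc[OF V] by simp
      fix r i assume "r < dim_row (msum n n (\<lambda>(k,l). H $$ (k,l) \<cdot>\<^sub>m (A l * V * mat_adjoint (A k))) ({..<m} \<times> {..<m}))"
        "i < dim_col (msum n n (\<lambda>(k,l). H $$ (k,l) \<cdot>\<^sub>m (A l * V * mat_adjoint (A k))) ({..<m} \<times> {..<m}))"
      then have ri: "r < n" "i < n" by simp_all
      have AVc: "\<And>l. A l * V \<in> carrier_mat n q" using mult_carrier_mat[OF Ac V] .
      have adjc: "\<And>k. mat_adjoint (A k) \<in> carrier_mat q n" by (rule carrier_matI) simp_all
      have prod: "\<And>k l. (A l * V * mat_adjoint (A k)) $$ (r,i) = (\<Sum>j<q. (\<Sum>s<q. A l $$ (r,s) * V $$ (s,j)) * \<alpha> i j k)"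
      proof -
        fix k l
        have "(A l * V * mat_adjoint (A k)) $$ (r,i) = (\<Sum>j<q. (A l * V) $$ (r,j) * mat_adjoint (A k) $$ (j,i))"
          using mult_index[OF AVc adjc ri] .
        also have "\<dots> = (\<Sum>j<q. (\<Sum>s<q. A l $$ (r,s) * V $$ (s,j)) * \<alpha> i j k)"
          using ri by (intro sum.cong refl) (simp add: mult_index[OF Ac V ri(1)] Ai[OF ri(2)] del: index_mult_mat)
        finally show "(A l * V * mat_adjoint (A k)) $$ (r,i) = (\<Sum>j<q. (\<Sum>s<q. A l $$ (r,s) * V $$ (s,j)) * \<alpha> i j k)" .
      qed
      have "msum n n (\<lambda>(k,l). H $$ (k,l) \<cdot>\<^sub>m (A l * V * mat_adjoint (A k))) ({..<m} \<times> {..<m}) $$ (r,i)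
          = (\<Sum>(k,l)\<in>{..<m} \<times> {..<m}. H $$ (k,l) * (A l * V * mat_adjoint (A k)) $$ (r,i))"
        using ri by (auto intro!: sum.cong)
      also have "\<dots> = (\<Sum>k<m. \<Sum>l<m. \<Sum>j<q. \<Sum>s<q. H $$ (k,l) * A l $$ (r,s) * V $$ (s,j) * \<alpha> i j k)"
        by (simp add: sum.cartesian_product[symmetric] prod sum_distrib_left sum_distrib_right ac_simps)
      also have "\<dots> = (\<Sum>k<m. \<Sum>j<q. \<Sum>s<q. \<Sum>l<m. H $$ (k,l) * A l $$ (r,s) * V $$ (s,j) * \<alpha> i j k)"
        by (rule sum.cong[OF refl], rule swap3[symmetric])
      also have "\<dots> = (\<Sum>k<m. \<Sum>j<q. \<Sum>s<q. Ls k $$ (r,s) * V $$ (s,j) * \<alpha> i j k)"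
        using ri FK by (intro sum.cong refl) (simp add: sum_distrib_right)
      also have "\<dots> = (\<Sum>j<q. \<Sum>s<q. \<Sum>k<m. Ls k $$ (r,s) * V $$ (s,j) * \<alpha> i j k)"
        by (rule swap3[symmetric])
      also have "\<dots> = (\<Sum>j<q. \<Sum>s<q. L $$ (i*n+r, j*q+s) * V $$ (s,j))"
        using ri FA by (intro sum.cong refl) (simp add: sum_distrib_right sum_distrib_left ac_simps)
      also have "\<dots> = \<L> V $$ (r,i)" using FLV[OF V ri] by simp
      finally show "\<L> V $$ (r,i) = msum n n (\<lambda>(k,l). H $$ (k,l) \<cdot>\<^sub>m (A l * V * mat_adjoint (A k))) ({..<m} \<times> {..<m}) $$ (r,i)"
        by (rule sym)
    qed
  qed
  have P2: "L = msum (n*n) (q*q) (\<lambda>(k,l). H $$ (k,l) \<cdot>\<^sub>m kron (mconj (A k)) (A l)) ({..<m} \<times> {..<m})"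
  proof (rule eq_matI)
    show "dim_row L = dim_row (msum (n*n) (q*q) (\<lambda>(k,l). H $$ (k,l) \<cdot>\<^sub>m kron (mconj (A k)) (A l)) ({..<m} \<times> {..<m}))"
      using Lc by simp
    show "dim_col L = dim_col (msum (n*n) (q*q) (\<lambda>(k,l). H $$ (k,l) \<cdot>\<^sub>m kron (mconj (A k)) (A l)) ({..<m} \<times> {..<m}))"
      using Lc by simp
    fix x y assume "x < dim_row (msum (n*n) (q*q) (\<lambda>(k,l). H $$ (k,l) \<cdot>\<^sub>m kron (mconj (A k)) (A l)) ({..<m} \<times> {..<m}))"
      "y < dim_col (msum (n*n) (q*q) (\<lambda>(k,l). H $$ (k,l) \<cdot>\<^sub>m kron (mconj (A k)) (A l)) ({..<m} \<times> {..<m}))"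
    then have xy: "x < n*n" "y < q*q" by simp_all
    have n0: "n > 0" "q > 0" using xy by (auto intro: gr0I)
    have d: "x div n < n" "y div q < q" using xy by (auto simp: less_mult_imp_div_less)
    have md: "x mod n < n" "y mod q < q" using n0 by auto
    have kr: "\<And>k l. kron (mconj (A k)) (A l) $$ (x,y) = \<alpha> (x div n) (y div q) k * A l $$ (x mod n, y mod q)"
      unfolding kron_def using xy d md by (simp add: mconji Ai)
    have kd: "\<And>k l. dim_row (kron (mconj (A k)) (A l)) = n*n" "\<And>k l. dim_col (kron (mconj (A k)) (A l)) = q*q"
      unfolding kron_def by simp_all
    have "msum (n*n) (q*q) (\<lambda>(k,l). H $$ (k,l) \<cdot>\<^sub>m kron (mconj (A k)) (A l)) ({..<m} \<times> {..<m}) $$ (x,y)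
        = (\<Sum>(k,l)\<in>{..<m} \<times> {..<m}. H $$ (k,l) * (\<alpha> (x div n) (y div q) k * A l $$ (x mod n, y mod q)))"
      using xy by (auto simp: kr kd intro!: sum.cong)
    also have "\<dots> = (\<Sum>k<m. \<Sum>l<m. \<alpha> (x div n) (y div q) k * H $$ (k,l) * A l $$ (x mod n, y mod q))"
      by (simp add: sum.cartesian_product[symmetric] ac_simps)
    also have "\<dots> = L $$ ((x div n)*n + x mod n, (y div q)*q + y mod q)"
      using FL[OF d(1) d(2) md(1) md(2)] by simp
    also have "\<dots> = L $$ (x,y)" by simp
    finally show "L $$ (x,y) = msum (n*n) (q*q) (\<lambda>(k,l). H $$ (k,l) \<cdot>\<^sub>m kron (mconj (A k)) (A l)) ({..<m} \<times> {..<m}) $$ (x,y)"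
      by (rule sym)
  qed
  define S where "S = {..<n} \<times> {..<q}"
  have FB2: "\<And>k r s. k < m \<Longrightarrow> r < n \<Longrightarrow> s < q \<Longrightarrow>
      Ls k $$ (r,s) = (\<Sum>(i,j)\<in>S. \<beta> k i j * L $$ (i*n+r, j*q+s))"
    unfolding S_def using FB by (simp add: sum.cartesian_product)
  have FH2: "\<And>k l. k < m \<Longrightarrow> l < m \<Longrightarrow>
      H $$ (k,l) = (\<Sum>(i,j)\<in>S. \<beta> k i j * conjugate (Ls l $$ (i,j)))"
    unfolding S_def using FH by (simp add: sum.cartesian_product)
  have finS: "finite S" unfolding S_def by simp
  have P5: "mat_adjoint H = H"
  proof (rule eq_matI)
    show "dim_row (mat_adjoint H) = dim_row H" using Hc by simp
    show "dim_col (mat_adjoint H) = dim_col H" using Hc by simp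
    fix k l assume "k < dim_row H" "l < dim_col H"
    then have kl: "k < m" "l < m" using Hc by auto
    have "mat_adjoint H $$ (k,l) = conjugate (H $$ (l,k))" using Hc kl by simp
    also have "\<dots> = (\<Sum>(i,j)\<in>S. conjugate (\<beta> l i j) * Ls k $$ (i,j))"
      unfolding FH2[OF kl(2) kl(1)] using finS
      by (simp add: sum_conjugate conjugate_dist_mul case_prod_unfold)
    also have "\<dots> = (\<Sum>(i,j)\<in>S. \<Sum>(a,b)\<in>S. conjugate (\<beta> l i j) * \<beta> k a b * L $$ (a*n+i, b*q+j))"
    proof (rule sum.cong[OF refl])
      fix x assume "x \<in> S"
      then obtain i j where x: "x = (i,j)" "i < n" "j < q" unfolding S_def by auto
      show "(case x of (i,j) \<Rightarrow> conjugate (\<beta> l i j) * Ls k $$ (i,j)) =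
          (case x of (i,j) \<Rightarrow> \<Sum>(a,b)\<in>S. conjugate (\<beta> l i j) * \<beta> k a b * L $$ (a*n+i, b*q+j))"
        using FB2[OF kl(1) x(2) x(3)] x(1) by (simp add: sum_distrib_left case_prod_unfold mult.assoc)
    qed
    also have "\<dots> = (\<Sum>(a,b)\<in>S. \<Sum>(i,j)\<in>S. conjugate (\<beta> l i j) * \<beta> k a b * L $$ (a*n+i, b*q+j))"
      unfolding case_prod_unfold by (rule sum.swap)
    also have "\<dots> = (\<Sum>(a,b)\<in>S. \<beta> k a b * conjugate (Ls l $$ (a,b)))"
    proof (rule sum.cong[OF refl])
      fix y assume "y \<in> S"
      then obtain a b where y: "y = (a,b)" "a < n" "b < q" unfolding S_def by auto
      have c: "conjugate (Ls l $$ (a,b)) = (\<Sum>(i,j)\<in>S. conjugate (\<beta> l i j) * L $$ (a*n+i, b*q+j))"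
      proof -
        have "conjugate (Ls l $$ (a,b)) = (\<Sum>(i,j)\<in>S. conjugate (\<beta> l i j) * conjugate (L $$ (i*n+a, j*q+b)))"
          unfolding FB2[OF kl(2) y(2) y(3)] using finS
          by (simp add: sum_conjugate conjugate_dist_mul case_prod_unfold)
        also have "\<dots> = (\<Sum>(i,j)\<in>S. conjugate (\<beta> l i j) * L $$ (a*n+i, b*q+j))"
        proof (rule sum.cong[OF refl])
          fix x assume "x \<in> S"
          then obtain i j where x: "x = (i,j)" "i < n" "j < q" unfolding S_def by auto
          show "(case x of (i,j) \<Rightarrow> conjugate (\<beta> l i j) * conjugate (L $$ (i*n+a, j*q+b))) =
              (case x of (i,j) \<Rightarrow> conjugate (\<beta> l i j) * L $$ (a*n+i, b*q+j))"
            using FS[OF y(2) x(2) y(3) x(3)] x(1) by simp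
        qed
        finally show ?thesis .
      qed
      show "(case y of (a,b) \<Rightarrow> \<Sum>(i,j)\<in>S. conjugate (\<beta> l i j) * \<beta> k a b * L $$ (a*n+i, b*q+j)) =
          (case y of (a,b) \<Rightarrow> \<beta> k a b * conjugate (Ls l $$ (a,b)))"
        using y(1) c by (simp add: sum_distrib_left case_prod_unfold ac_simps)
    qed
    also have "\<dots> = H $$ (k,l)" using FH2[OF kl] by simp
    finally show "mat_adjoint H $$ (k,l) = H $$ (k,l)" .
  qed
  have HT: "transpose_mat H \<in> carrier_mat m m" using Hc by simp
  have AHc: "Ah * transpose_mat H \<in> carrier_mat (n*q) m" using Ahc HT by simp
  have adc: "mat_adjoint Ah \<in> carrier_mat m (n*q)" using Ahc by (intro carrier_matI) auto
  have rk: "m \<le> vec_space.rank (n*q) (Ah * transpose_mat H)"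
  proof -
    have "m = vec_space.rank (n*q) (choi q n \<L>)" using m_def by (simp add: mult.commute)
    also have "\<dots> = vec_space.rank (n*q) ((Ah * transpose_mat H) * mat_adjoint Ah)" using P4 by simp
    also have "\<dots> \<le> vec_space.rank (n*q) (Ah * transpose_mat H)"
      by (rule vec_space.rank_mult_le[OF AHc adc])
    finally show ?thesis .
  qed
  have detH: "det H \<noteq> 0"
  proof
    assume "det H = 0"
    then have "det (transpose_mat H) = 0" using det_transpose[OF Hc] by simp
    then obtain v where v: "v \<in> carrier_vec m" "v \<noteq> 0\<^sub>v m" "transpose_mat H *\<^sub>v v = 0\<^sub>v m"
      using det_0_iff_vec_prod_zero_field[OF HT] by blast
    have "(Ah * transpose_mat H) *\<^sub>v v = Ah *\<^sub>v (transpose_mat H *\<^sub>v v)"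
      using Ahc HT v(1) by (rule assoc_mult_mat_vec)
    also have "\<dots> = 0\<^sub>v (n*q)" using v(3) Ahc by (auto intro!: eq_vecI simp: scalar_prod_def)
    finally have "vec_space.rank (n*q) (Ah * transpose_mat H) < m"
      using vec_space.rank_lt_kernel[OF AHc v(1) v(2)] by blast
    then show False using rk by simp
  qed
  have P6: "invertible_mat H"
  proof -
    have "H \<in> Units (ring_mat TYPE('a) m ())" using det_non_zero_imp_unit[OF Hc detH] .
    then obtain B where B: "B \<in> carrier_mat m m" "B * H = 1\<^sub>m m" "H * B = 1\<^sub>m m"
      unfolding Units_def ring_mat_def by auto
    then show ?thesis unfolding invertible_mat_def inverts_mat_def using Hc by auto
  qed
  show ?thesis using P1 P2 P3 P4 P5 P6 unfolding Ah_def by blast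
qed

end
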